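(* Let $r>0$ and let $k\ge3$ be an integer. Set $y_1:=0$ and for integers $0\le m<k$ define $$C_{m,k,r}:=\int_0^\infty\!dy_2\int_{y_2}^\infty\!dy_3\cdots\int_{y_m}^\infty\!dy_{m+1}\,e^{-ry_{m+1}}\int_0^{y_{m+1}+(m+1)}\!dy_{m+2}\int_0^{y_{m+2}+1}\!dy_{m+3}\cdots\int_0^{y_{k-1}+1}\!dy_k$$ (where for $m=0$ the outer integrals are absent and $y_{m+1}=y_1=0$, and for $m=k-1$ the inner integrals are absent). Then $$C_{m,k,r}\le c\Bigl(\frac{2(\mathrm er+1)}{r}\Bigr)^{k-1}(\mathrm er+1)^{-m},\qquad c:=\mathrm e^{2+1/12}/2.$$ *)

theory Defs
  imports "HOL-Analysis.Analysis"
begin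

(* inner_int n t = \<integral>_0^t dy_1 \<integral>_0^{y_1+1} dy_2 ... \<integral>_0^{y_{n-1}+1} dy_n  1
   (n nested integrals, the first with upper limit t, later ones y_prev + 1) *)
primrec inner_int :: "nat \<Rightarrow> real \<Rightarrow> ennreal" where
  "inner_int 0 t = 1"
| "inner_int (Suc n) t = (\<integral>\<^sup>+ s\<in>{0..t}. inner_int n (s + 1) \<partial>lborel)"

(* outer_int n a g = \<integral>_a^\<infinity> dz_1 \<integral>_{z_1}^\<infinity> dz_2 ... \<integral>_{z_{n-1}}^\<infinity> dz_n  g z_n
   (n nested integrals); for n = 0 it is g a *)
primrec outer_int :: "nat \<Rightarrow> real \<Rightarrow> (real \<Rightarrow> ennreal) \<Rightarrow> ennreal" where
  "outer_int 0 a g = g a"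
| "outer_int (Suc n) a g = (\<integral>\<^sup>+ y\<in>{a..}. outer_int n y g \<partial>lborel)"

(* C_{m,k,r}: outer variables y_2..y_{m+1} (m of them, starting from y_1 = 0),
   weight e^{-r y_{m+1}}, then k-1-m inner variables y_{m+2}..y_k *)
definition C_int :: "nat \<Rightarrow> nat \<Rightarrow> real \<Rightarrow> ennreal" where
  "C_int m k r = outer_int m 0
     (\<lambda>y. ennreal (exp (- r * y)) * inner_int (k - 1 - m) (y + real (m + 1)))"

end

theory Submission
  imports Defs "HOL-Real_Asymp.Real_Asymp"
begin

lemma pow_fact_le_exp:
  fixes x :: real assumes "x \<ge> 0"
  shows "x ^ n / fact n \<le> exp x"
proof -
  have "(\<Sum>i\<in>{n}. x ^ i /\<^sub>R fact i) \<le> (\<Sum>i. x ^ i /\<^sub>R fact i)"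
    using assms summable_exp_generic[of x]
    by (intro sum_le_suminf) auto
  then show ?thesis by (simp add: exp_def divide_inverse ac_simps)
qed

lemma pow_le_exp_half:
  fixes x :: real assumes "x \<ge> 0"
  shows "x ^ n \<le> (2 * real n / exp 1) ^ n * exp (x / 2)"
proof (cases "n = 0")
  case True then show ?thesis using assms by simp
next
  case False
  then have np: "real n > 0" by simp
  have "x / (2 * n) \<le> exp (x / (2 * n) - 1)"
    using exp_ge_add_one_self[of "x / (2 * n) - 1"] by simp
  then have "(x / (2 * n)) ^ n \<le> exp (x / (2 * n) - 1) ^ n"
    using assms np by (intro power_mono) auto
  also have "\<dots> = exp (real n * (x / (2 * n) - 1))"
    by (simp only: exp_of_nat_mult)
  also have "real n * (x / (2 * n) - 1) = x / 2 - real n * 1"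
    using np by (simp add: field_simps)
  also have "exp (x / 2 - real n * 1) = exp (x / 2) / exp 1 ^ n"
    by (simp only: exp_diff exp_of_nat_mult)
  finally have h: "(x / (2 * n)) ^ n \<le> exp (x / 2) / exp 1 ^ n" .
  have "x ^ n = (2 * n) ^ n * (x / (2 * n)) ^ n"
    using np by (simp add: power_divide)
  also have "\<dots> \<le> (2 * n) ^ n * (exp (x / 2) / exp 1 ^ n)"
    using h by (intro mult_left_mono) auto
  also have "\<dots> = (2 * real n / exp 1) ^ n * exp (x / 2)"
    by (simp add: power_divide)
  finally show ?thesis .
qed

lemma inner_bound:
  "t \<ge> 0 \<Longrightarrow> inner_int n t \<le> ennreal ((t + real n) ^ n / fact n)"
proof (induction n arbitrary: t)
  case 0 then show ?case by simp
next
  case (Suc n)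
  have "inner_int (Suc n) t = (\<integral>\<^sup>+ s. inner_int n (s + 1) * indicator {0..t} s \<partial>lborel)"
    by simp
  also have "\<dots> \<le> (\<integral>\<^sup>+ s. ennreal ((s + 1 + real n) ^ n / fact n) * indicator {0..t} s \<partial>lborel)"
    by (intro nn_integral_mono) (auto split: split_indicator intro: order_trans[OF Suc.IH] simp: add.assoc)
  also have "\<dots> = ennreal ((t + 1 + real n) ^ Suc n / fact (Suc n) - (0 + 1 + real n) ^ Suc n / fact (Suc n))"
  proof (intro nn_integral_FTC_Icc[where F = "\<lambda>s. (s + 1 + real n) ^ Suc n / fact (Suc n)"])
    fix s :: real
    have "DERIV (\<lambda>s. (s + 1 + real n) ^ Suc n) s :> real (Suc n) * (s + 1 + real n) ^ n"
      apply (auto intro!: derivative_eq_intros)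
      apply (cases n)
       apply (simp_all add: algebra_simps)
      done
    then have "DERIV (\<lambda>s. (s + 1 + real n) ^ Suc n / fact (Suc n)) s :> real (Suc n) * (s + 1 + real n) ^ n / fact (Suc n)"
      by (rule DERIV_cdivide)
    moreover have "real (Suc n) * (s + 1 + real n) ^ n / fact (Suc n) = (s + 1 + real n) ^ n / fact n"
      by (simp add: fact_Suc del: of_nat_Suc)
    ultimately show "DERIV (\<lambda>s. (s + 1 + real n) ^ Suc n / fact (Suc n)) s :> (s + 1 + real n) ^ n / fact n"
      by simp
  qed (use Suc.prems in auto)
  also have "\<dots> \<le> ennreal ((t + real (Suc n)) ^ Suc n / fact (Suc n))"
    by (intro ennreal_leI) (simp add: add_ac)
  finally show ?case .
qed

lemma outer_mono:
  "(\<And>y. y \<ge> a \<Longrightarrow> g y \<le> h y) \<Longrightarrow> outer_int m a g \<le> outer_int m a h"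
proof (induction m arbitrary: a)
  case 0 then show ?case by simp
next
  case (Suc m)
  show ?case
    by (simp, intro nn_integral_mono)
       (auto split: split_indicator intro!: mult_right_mono Suc.IH Suc.prems)
qed

lemma exp_to_0: "(l::real) > 0 \<Longrightarrow> ((\<lambda>y. exp (- l * y)) \<longlongrightarrow> 0) at_top"
  by real_asymp

lemma outer_exp:
  fixes l1 l2 A B :: real
  assumes "l1 > 0" "l2 > 0" "A \<ge> 0" "B \<ge> 0"
  shows "outer_int m a (\<lambda>y. ennreal (A * exp (- l1 * y) + B * exp (- l2 * y)))
       = ennreal (A * exp (- l1 * a) / l1 ^ m + B * exp (- l2 * a) / l2 ^ m)"
proof (induction m arbitrary: a)
  case 0 then show ?case by simp
next
  case (Suc m)
  have "outer_int (Suc m) a (\<lambda>y. ennreal (A * exp (- l1 * y) + B * exp (- l2 * y)))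
     = (\<integral>\<^sup>+ y. ennreal (A * exp (- l1 * y) / l1 ^ m + B * exp (- l2 * y) / l2 ^ m) * indicator {a..} y \<partial>lborel)"
    by (simp only: outer_int.simps Suc.IH)
  also have "\<dots> = ennreal (0 - (- (A * exp (- l1 * a) / l1 ^ Suc m + B * exp (- l2 * a) / l2 ^ Suc m)))"
  proof (rule nn_integral_FTC_atLeast)
    show "((\<lambda>y. - (A * exp (- l1 * y) / l1 ^ Suc m + B * exp (- l2 * y) / l2 ^ Suc m)) \<longlongrightarrow> 0) at_top"
    proof -
      have "((\<lambda>y. - (A * exp (- l1 * y) / l1 ^ Suc m + B * exp (- l2 * y) / l2 ^ Suc m))
         \<longlongrightarrow> - (A * 0 / l1 ^ Suc m + B * 0 / l2 ^ Suc m)) at_top"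
        using assms
        by (intro tendsto_minus tendsto_add tendsto_divide tendsto_mult tendsto_const exp_to_0) auto
      then show ?thesis by simp
    qed
  qed (use assms in \<open>auto intro!: derivative_eq_intros simp: field_simps\<close>)
  finally show ?case by (simp add: add.commute)
qed

lemma npow_fact: "real n ^ n / fact n \<le> exp 1 ^ n"
  using pow_fact_le_exp[of "real n" n] by (simp add: exp_of_nat_mult[symmetric])

lemma kpow_bound:
  assumes "n \<le> k"
  shows "(real k / exp 1) ^ n / fact n \<le> 2 ^ k"
proof (cases "n = 0")
  case True then show ?thesis by simp
next
  case False
  have e: "exp (1::real) ^ n > 0" by simp
  have "(real k / exp 1) ^ n / fact n = (real k / real n) ^ n * ((real n ^ n / fact n) / exp 1 ^ n)"
    using False by (simp add: power_divide field_simps)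
  also have "\<dots> \<le> (real k / real n) ^ n * 1"
    using npow_fact[of n] e by (intro mult_left_mono; (subst pos_divide_le_eq)?; simp)
  also have "\<dots> \<le> real (k choose n)"
    using binomial_ge_n_over_k_pow_k[OF assms] by simp
  also have "\<dots> \<le> 2 ^ k"
    using binomial_le_pow2[of k n] by (metis of_nat_le_iff of_nat_numeral of_nat_power)
  finally show ?thesis .
qed

lemma pointwise:
  fixes r y :: real and n k :: nat
  assumes r: "r > 0" and y: "y \<ge> 0"
  defines "E \<equiv> exp 1 + 1 / r"
  shows "exp (- r * y) * ((y + real k) ^ n / fact n)
     \<le> (E ^ n * (2 * real n / exp 1) ^ n / fact n) * exp (- (r / 2) * y)
       + (E ^ n * (real k / exp 1) ^ n / fact n) * exp (- r * y)"
proof -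
  define M where "M = max (r * y) (real k / exp 1)"
  have M0: "M \<ge> 0" unfolding M_def using r y by (intro max.coboundedI1) simp
  have "exp 1 * M \<ge> exp 1 * (real k / exp 1)" unfolding M_def by (intro mult_left_mono) auto
  then have "exp 1 * M \<ge> real k" by simp
  moreover have "M / r \<ge> y" using r unfolding M_def by (simp add: field_simps)
  moreover have "E * M = exp 1 * M + M / r" by (simp add: E_def algebra_simps)
  ultimately have "y + real k \<le> E * M" by linarith
  then have "(y + real k) ^ n \<le> (E * M) ^ n" using y by (intro power_mono) auto
  also have "\<dots> = E ^ n * M ^ n" by (simp add: power_mult_distrib)
  also have "M ^ n \<le> (r * y) ^ n + (real k / exp 1) ^ n"
    using r y unfolding M_def by (auto simp: max_def)
  then have "E ^ n * M ^ n \<le> E ^ n * ((r * y) ^ n + (real k / exp 1) ^ n)"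
    unfolding E_def using r by (intro mult_left_mono) auto
  finally have h1: "(y + real k) ^ n \<le> E ^ n * ((r * y) ^ n + (real k / exp 1) ^ n)" .
  have h2: "exp (- r * y) * (r * y) ^ n \<le> (2 * real n / exp 1) ^ n * exp (- (r / 2) * y)"
  proof -
    have "exp (- r * y) * (r * y) ^ n \<le> exp (- r * y) * ((2 * real n / exp 1) ^ n * exp (r * y / 2))"
      using pow_le_exp_half[of "r * y" n] r y by (intro mult_left_mono) auto
    also have "\<dots> = (2 * real n / exp 1) ^ n * (exp (- r * y) * exp (r * y / 2))" by simp
    also have "exp (- r * y) * exp (r * y / 2) = exp (- (r / 2) * y)"
      by (simp add: exp_add[symmetric])
    finally show ?thesis .
  qed
  have E0: "E \<ge> 0" unfolding E_def using r by (simp add: add_nonneg_nonneg)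
  have "exp (- r * y) * ((y + real k) ^ n / fact n) \<le> exp (- r * y) * (E ^ n * ((r * y) ^ n + (real k / exp 1) ^ n) / fact n)"
    using h1 by (intro mult_left_mono divide_right_mono) auto
  also have "\<dots> = E ^ n / fact n * (exp (- r * y) * (r * y) ^ n) + (E ^ n * (real k / exp 1) ^ n / fact n) * exp (- r * y)"
    by (simp add: field_simps)
  also have "\<dots> \<le> E ^ n / fact n * ((2 * real n / exp 1) ^ n * exp (- (r / 2) * y)) + (E ^ n * (real k / exp 1) ^ n / fact n) * exp (- r * y)"
    using h2 E0 by (intro add_right_mono mult_left_mono) auto
  finally show ?thesis by simp
qed

theorem lemma6:
  fixes r :: real and k m :: nat
  assumes "r > 0" and "k \<ge> 3" and "m < k"
  shows "C_int m k r \<le> ennreal (exp (2 + 1/12) / 2 * (2 * (exp 1 * r + 1) / r) ^ (k - 1)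
                                  / (exp 1 * r + 1) ^ m)"
proof -
  define n where "n = k - 1 - m"
  have km: "k - 1 = n + m" "k = n + m + 1" using assms unfolding n_def by auto
  define E where "E = exp 1 + 1 / r"
  have r: "r > 0" by fact
  have E0: "E > 0" unfolding E_def using r by (simp add: add_pos_pos)
  define A where "A = E ^ n * (2 * real n / exp 1) ^ n / fact n"
  define B where "B = E ^ n * (real k / exp 1) ^ n / fact n"
  have A0: "A \<ge> 0" and B0: "B \<ge> 0" unfolding A_def B_def using E0 by auto
  have "C_int m k r = outer_int m 0 (\<lambda>y. ennreal (exp (- r * y)) * inner_int n (y + real (m + 1)))"
    unfolding C_int_def n_def by simp
  also have "\<dots> \<le> outer_int m 0 (\<lambda>y. ennreal (A * exp (- (r / 2) * y) + B * exp (- r * y)))"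
  proof (rule outer_mono)
    fix y :: real assume y: "0 \<le> y"
    have "ennreal (exp (- r * y)) * inner_int n (y + real (m + 1))
        \<le> ennreal (exp (- r * y)) * ennreal ((y + real (m + 1) + real n) ^ n / fact n)"
      using y by (intro mult_left_mono inner_bound) auto
    also have "\<dots> = ennreal (exp (- r * y) * ((y + real k) ^ n / fact n))"
      using y km by (simp add: ennreal_mult[symmetric] add_ac)
    also have "\<dots> \<le> ennreal (A * exp (- (r / 2) * y) + B * exp (- r * y))"
      unfolding A_def B_def E_def by (intro ennreal_leI pointwise r y)
    finally show "ennreal (exp (- r * y)) * inner_int n (y + real (m + 1))
        \<le> ennreal (A * exp (- (r / 2) * y) + B * exp (- r * y))" .
  qed
  also have "\<dots> = ennreal (A / (r / 2) ^ m + B / r ^ m)"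
    using outer_exp[of "r/2" r A B m 0] r A0 B0 by simp
  also have "\<dots> \<le> ennreal (exp (2 + 1/12) / 2 * (2 * (exp 1 * r + 1) / r) ^ (k - 1)
                                  / (exp 1 * r + 1) ^ m)"
  proof (intro ennreal_leI)
    define c :: real where "c = exp (2 + 1/12) / 2"
    have e1: "exp (1::real) \<ge> 2.7"
    proof -
      have "exp 1 - 5837465777 / 2147483648 \<ge> - (inverse(2 ^ 32)::real)"
        using e_approx_32 by linarith
      then show ?thesis by simp
    qed
    have "exp (2::real) = exp 1 * exp 1" by (simp add: exp_add[symmetric])
    also have "\<dots> \<ge> 2.7 * 2.7" using e1 by (intro mult_mono) auto
    finally have "exp (2::real) \<ge> 7" by simp
    moreover have "exp (2::real) \<le> exp (2 + 1/12)" by (subst exp_le_cancel_iff) simp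
    ultimately have c3: "c \<ge> 3" unfolding c_def by linarith
    have a1: "(2 * real n / exp 1) ^ n / fact n \<le> 2 ^ n"
    proof -
      have "(2 * real n / exp 1) ^ n / fact n = 2 ^ n * ((real n ^ n / fact n) / exp 1 ^ n)"
        by (simp add: power_divide power_mult_distrib field_simps)
      also have "\<dots> \<le> 2 ^ n * 1"
        using npow_fact[of n] by (intro mult_left_mono; (subst pos_divide_le_eq)?; simp)
      finally show ?thesis by simp
    qed
    have b1: "(real k / exp 1) ^ n / fact n \<le> 2 * 2 ^ (n + m)"
      using kpow_bound[of n k] km by simp
    have X: "2 ^ m * ((2 * real n / exp 1) ^ n / fact n) + (real k / exp 1) ^ n / fact n \<le> c * 2 ^ (n + m)"
    proof -
      have "2 ^ m * ((2 * real n / exp 1) ^ n / fact n) \<le> (2::real) ^ m * 2 ^ n"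
        using a1 by (intro mult_left_mono) auto
      then have "2 ^ m * ((2 * real n / exp 1) ^ n / fact n) + (real k / exp 1) ^ n / fact n
          \<le> 3 * 2 ^ (n + m)" using b1 power_add[of "2::real" m n] by (simp only: add.commute[of n m]; linarith)
      also have "\<dots> \<le> c * 2 ^ (n + m)" using c3 by (intro mult_right_mono) auto
      finally show ?thesis .
    qed
    have lhs: "A / (r / 2) ^ m + B / r ^ m
       = E ^ n / r ^ m * (2 ^ m * ((2 * real n / exp 1) ^ n / fact n) + (real k / exp 1) ^ n / fact n)"
      unfolding A_def B_def using r by (simp add: field_simps power_divide)
    have rhs: "c * (2 * (exp 1 * r + 1) / r) ^ (k - 1) / (exp 1 * r + 1) ^ m
       = E ^ n / r ^ m * (c * 2 ^ (n + m))"
    proof -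
      have q: "2 * (exp 1 * r + 1) / r = 2 * E" and q2: "exp 1 * r + 1 = r * E"
        unfolding E_def using r by (simp_all add: field_simps)
      show ?thesis unfolding km(1) q q2
        using r E0 by (simp add: power_add power_mult_distrib field_simps)
    qed
    have "E ^ n / r ^ m \<ge> 0" using r E0 by simp
    then show "A / (r / 2) ^ m + B / r ^ m \<le> exp (2 + 1/12) / 2 * (2 * (exp 1 * r + 1) / r) ^ (k - 1)
                                  / (exp 1 * r + 1) ^ m"
      unfolding lhs rhs[unfolded c_def] using X unfolding c_def by (intro mult_left_mono) auto
  qed
  finally show ?thesis .
qed

end
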